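(* Let $d\in\mathbb N$, $\varepsilon\in(0,1)$, and consider Thiémard's decomposition process of $[0,1)^d$ described in the context. Let $P$ be a box generated in the process that is decomposed via DECOMPOSE$(P,j)$ for some type $j\in\{1,\dots,d\}$, and assume $\delta^P W(P)>\varepsilon$. Then for every $i\in\{j,\dots,d\}$ the child $Q^P_i$ (of type $i$) is itself decomposed, and $$\delta^{Q_i^P}=\left(\frac{W(P)-\varepsilon/\delta^P}{W(P)-\varepsilon}\right)^{\frac{1}{d-i+1}}\delta^P .$$ Moreover, the right-hand side, viewed as the function $g(\delta,w,i)=\big(\frac{w-\varepsilon/\delta}{w-\varepsilon}\big)^{1/(d-i+1)}\delta$ on the domain $\delta\in(0,1)$, $w>\varepsilon/\delta$, $i\in\{1,\dots,d\}$, is strictly increasing in $\delta$, strictly increasing in $w$, and strictly decreasing in $i$.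
   Context: Fix $d\in\mathbb N$ and $\varepsilon\in(0,1]$. For $x,y\in[0,1]^d$ write $[x,y)=\prod_{i=1}^d[x_i,y_i)$ and define the weight $W([x,y))=\prod_{i=1}^d y_i-\prod_{i=1}^d x_i$. Thiémard's decomposition process generates boxes, each with a type in $\{1,\dots,d+1\}$. It starts with $I^d=[0,1)^d=[(0,\dots,0),(1,\dots,1))$, of type $1$. Whenever a generated box $P=[\alpha,\beta)$ has type $j\le d$ and $W(P)>\varepsilon$, it is decomposed (procedure DECOMPOSE$(P,j)$) as follows: put $$\delta^P=\left(\frac{\prod_{i=1}^d\beta_i-\varepsilon}{\prod_{i=1}^{j-1}\alpha_i\prod_{i=j}^d\beta_i}\right)^{1/(d-j+1)},\qquad \gamma^P_i=\alpha_i\ (i<j),\quad \gamma^P_i=\delta^P\beta_i\ (i\ge j).$$ The children of $P$ are the boxes $Q^P_k=[a^{(k)},b^{(k)})$ for $k=j,\dots,d$, where $a^{(k)}_i=\gamma^P_i$ for $i<k$, $a^{(k)}_i=\alpha_i$ for $i\ge k$, $b^{(k)}_k=\gamma^P_k$, $b^{(k)}_i=\beta_i$ for $i\neq k$; the box $Q^P_k$ has type $k$. In addition $P$ has the child $Q^P_{d+1}=[\gamma^P,\beta)$ of type $d+1$. A generated box of type $d+1$ or of weight at most $\varepsilon$ is not decomposed. (Known facts from Thiémard: $\delta^P\in(0,1)$; the process terminates after finitely many steps; $W(Q^P_{d+1})=\varepsilon$ and $W(Q^P_k)=\delta^PW(P)$ for $j\le k\le d$.) *)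

theory Defs
  imports Complex_Main
begin

text \<open>Boxes [x,y) in [0,1)^d are represented by pairs of coordinate functions
  x y :: nat => real, of which only the coordinates 1..d are relevant.
  A generated box carries its type, so it is a triple (alpha, beta, j).\<close>

type_synonym tbox = "(nat \<Rightarrow> real) \<times> (nat \<Rightarrow> real) \<times> nat"

definition W :: "nat \<Rightarrow> (nat \<Rightarrow> real) \<Rightarrow> (nat \<Rightarrow> real) \<Rightarrow> real" where
  "W d x y = (\<Prod>i=1..d. y i) - (\<Prod>i=1..d. x i)"

definition tdelta :: "nat \<Rightarrow> real \<Rightarrow> tbox \<Rightarrow> real" where
  "tdelta d eps P = (case P of (\<alpha>, \<beta>, j) \<Rightarrow>
     (((\<Prod>i=1..d. \<beta> i) - eps) / ((\<Prod>i=1..<j. \<alpha> i) * (\<Prod>i=j..d. \<beta> i)))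
       powr (1 / real (d - j + 1)))"

definition tgamma :: "nat \<Rightarrow> real \<Rightarrow> tbox \<Rightarrow> nat \<Rightarrow> real" where
  "tgamma d eps P = (case P of (\<alpha>, \<beta>, j) \<Rightarrow>
     (\<lambda>i. if i < j then \<alpha> i else tdelta d eps P * \<beta> i))"

definition tchild :: "nat \<Rightarrow> real \<Rightarrow> tbox \<Rightarrow> nat \<Rightarrow> tbox" where
  "tchild d eps P k = (case P of (\<alpha>, \<beta>, j) \<Rightarrow>
     (if k = d + 1 then (tgamma d eps P, \<beta>, d + 1)
      else ((\<lambda>i. if i < k then tgamma d eps P i else \<alpha> i),
            (\<lambda>i. if i = k then tgamma d eps P k else \<beta> i), k)))"

definition decomposed :: "nat \<Rightarrow> real \<Rightarrow> tbox \<Rightarrow> bool" where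
  "decomposed d eps P = (case P of (\<alpha>, \<beta>, j) \<Rightarrow> j \<le> d \<and> W d \<alpha> \<beta> > eps)"

inductive_set generated :: "nat \<Rightarrow> real \<Rightarrow> tbox set" for d eps where
  start: "((\<lambda>_. 0), (\<lambda>_. 1), 1) \<in> generated d eps"
| step: "P \<in> generated d eps \<Longrightarrow> decomposed d eps P \<Longrightarrow> P = (\<alpha>, \<beta>, j) \<Longrightarrow>
         j \<le> k \<Longrightarrow> k \<le> d + 1 \<Longrightarrow> tchild d eps P k \<in> generated d eps"

definition tg :: "nat \<Rightarrow> real \<Rightarrow> real \<Rightarrow> real \<Rightarrow> nat \<Rightarrow> real" where
  "tg d eps \<delta> w i = ((w - eps / \<delta>) / (w - eps)) powr (1 / real (d - i + 1)) * \<delta>"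

end

theory Submission
  imports Defs
begin


lemma tg_mono_delta:
  assumes e: "0 < eps" and d: "0 < d1" "d1 < d2" "d2 < 1" and w: "w > eps / d1" and m: "m \<ge> (1::nat)"
  shows "((w - eps/d1)/(w-eps)) powr (1/m) * d1 < ((w - eps/d2)/(w-eps)) powr (1/m) * d2"
proof -
  have "eps/d2 < eps/d1" using e d by (simp add: divide_strict_left_mono)
  have "eps < eps/d1" using e d by (simp add: less_divide_eq)
  hence we: "w - eps > 0" using w by simp
  have b1: "0 < (w - eps/d1)/(w-eps)" using w we by (intro divide_pos_pos) auto
  have lt: "(w - eps/d1)/(w-eps) < (w - eps/d2)/(w-eps)"
    using \<open>eps/d2 < eps/d1\<close> we by (simp add: divide_strict_right_mono)
  have "((w - eps/d1)/(w-eps)) powr (1/m) < ((w - eps/d2)/(w-eps)) powr (1/m)"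
    by (rule powr_less_mono2) (use b1 m lt in auto)
  moreover have "0 < ((w - eps/d1)/(w-eps)) powr (1/m)" using b1 w we by simp
  ultimately show ?thesis using d by (intro mult_strict_mono) auto
qed

lemma tg_mono_w:
  assumes e: "0 < eps" and d: "0 < dl" "dl < 1" and w: "eps/dl < w1" "w1 < w2" and m: "m \<ge> (1::nat)"
  shows "((w1 - eps/dl)/(w1-eps)) powr (1/m) * dl < ((w2 - eps/dl)/(w2-eps)) powr (1/m) * dl"
proof -
  have "eps < eps/dl" using e d by (simp add: less_divide_eq)
  hence we: "w1 - eps > 0" "w2 - eps > 0" using w by auto
  have b1: "0 < (w1 - eps/dl)/(w1-eps)" using w we by simp
  have c: "eps/dl - eps > 0" using \<open>eps < eps/dl\<close> by simp
  have eq: "\<And>w. w - eps > 0 \<Longrightarrow> (w - eps/dl)/(w-eps) = 1 - (eps/dl - eps)/(w - eps)"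
    by (simp add: field_simps)
  have "(eps/dl - eps)/(w2 - eps) < (eps/dl - eps)/(w1 - eps)"
    using c we w by (intro divide_strict_left_mono) auto
  hence "(w1 - eps/dl)/(w1-eps) < (w2 - eps/dl)/(w2-eps)" using eq we by simp
  hence "((w1 - eps/dl)/(w1-eps)) powr (1/m) < ((w2 - eps/dl)/(w2-eps)) powr (1/m)"
    using b1 m by (intro powr_less_mono2) auto
  thus ?thesis using d by simp
qed

lemma tg_mono_i:
  assumes e: "0 < eps" and d: "0 < dl" "dl < 1" and w: "eps/dl < w" and m: "1 \<le> m2" "m2 < (m1::nat)"
  shows "((w - eps/dl)/(w-eps)) powr (1/m2) * dl < ((w - eps/dl)/(w-eps)) powr (1/m1) * dl"
proof -
  have "eps < eps/dl" using e d by (simp add: less_divide_eq)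
  hence we: "w - eps > 0" using w by auto
  have b1: "0 < (w - eps/dl)/(w-eps)" using w we by simp
  have b2: "(w - eps/dl)/(w-eps) < 1" using we \<open>eps < eps/dl\<close> by simp
  have "1/real m1 < 1/real m2" using m by (simp add: frac_less2)
  hence "((w - eps/dl)/(w-eps)) powr (1/m1) > ((w - eps/dl)/(w-eps)) powr (1/m2)"
    using b1 b2 by (simp add: powr_less_mono')
  thus ?thesis using d by (intro mult_strict_right_mono) auto
qed


definition inv :: "nat \<Rightarrow> tbox \<Rightarrow> bool" where
  "inv d P = (case P of (\<alpha>, \<beta>, j) \<Rightarrow> 1 \<le> j \<and> j \<le> d+1 \<and> (\<forall>i\<in>{1..d}. 0 < \<beta> i)
     \<and> (\<forall>i\<in>{1..d}. i < j \<longrightarrow> 0 < \<alpha> i) \<and> (\<forall>i\<in>{1..d}. j \<le> i \<longrightarrow> \<alpha> i = 0))"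

lemma W_eq:
  assumes "inv d (\<alpha>, \<beta>, j)" "j \<le> d"
  shows "W d \<alpha> \<beta> = (\<Prod>i=1..d. \<beta> i)"
proof -
  have "(\<Prod>i=1..d. \<alpha> i) = 0" using assms by (intro prod_zero) (auto simp: inv_def intro!: bexI[of _ j])
  thus ?thesis by (simp add: W_def)
qed

lemma denom_pos:
  assumes "inv d (\<alpha>, \<beta>, j)"
  shows "0 < (\<Prod>i=1..<j. \<alpha> i) * (\<Prod>i=j..d. \<beta> i)"
  using assms by (auto simp: inv_def intro!: prod_pos mult_pos_pos)

lemma delta_pos:
  assumes "inv d (\<alpha>, \<beta>, j)" "decomposed d eps (\<alpha>, \<beta>, j)"
  shows "0 < tdelta d eps (\<alpha>, \<beta>, j)"
proof -
  have "j \<le> d" "W d \<alpha> \<beta> > eps" using assms(2) by (auto simp: decomposed_def)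
  hence "(\<Prod>i=1..d. \<beta> i) - eps > 0" using W_eq[OF assms(1)] by simp
  hence "0 < ((\<Prod>i=1..d. \<beta> i) - eps) / ((\<Prod>i=1..<j. \<alpha> i) * (\<Prod>i=j..d. \<beta> i))"
    using denom_pos[OF assms(1)] by simp
  thus ?thesis unfolding tdelta_def prod.case by (metis less_irrefl powr_gt_zero)
qed

lemma gen_inv:
  assumes "P \<in> generated d eps" shows "inv d P"
  using assms
proof (induction rule: generated.induct)
  case start
  then show ?case by (auto simp: inv_def)
next
  case (step P \<alpha> \<beta> j k)
  have ip: "inv d (\<alpha>, \<beta>, j)" using step by simp
  have dp: "0 < tdelta d eps (\<alpha>, \<beta>, j)" using delta_pos[OF ip] step by simp
  show ?case
  proof (cases "k = d+1")
    case True
    then show ?thesis using ip dp step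
      by (auto simp: inv_def tchild_def tgamma_def)
  next
    case False
    then show ?thesis using ip dp step
      by (auto simp: inv_def tchild_def tgamma_def)
  qed
qed


lemma root_pow:
  fixes x :: real and m :: nat
  assumes "x > 0" "m > 0"
  shows "(x powr (1 / real m)) ^ m = x"
proof -
  have "(x powr (1 / real m)) ^ m = (x powr (1 / real m)) powr (real m)"
    using assms by (simp add: powr_realpow)
  also have "\<dots> = x" using assms by (simp add: powr_powr)
  finally show ?thesis .
qed

lemma key:
  fixes A B dl w e :: real and m k m' :: nat
  assumes A: "A > 0" and B: "B > 0" and dl: "dl > 0" and dm: "dl ^ m = (w - e) / (A * B)"
    and km: "k + m' = m + 1" and m': "m' \<ge> 1" and we: "w > e" and dw: "dl * w > e"
  shows "((dl * w - e) / (A * dl ^ k * B)) powr (1 / m') = ((w - e/dl)/(w - e)) powr (1/m') * dl"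
proof -
  obtain n where n: "m' = Suc n" using m' by (cases m') auto
  have mk: "m = k + n" using km n by simp
  have AB: "A * B = (w - e) / dl ^ m" using dm dl A B we by (simp add: field_simps)
  have "A * dl ^ k * B = (w - e) / dl ^ n"
    using AB dl mk by (simp add: power_add field_simps)
  hence "(dl * w - e) / (A * dl ^ k * B) = (dl * w - e) * dl ^ n / (w - e)"
    using dl we by simp
  also have "\<dots> = ((w - e/dl)/(w - e)) * dl ^ m'"
    using dl we n by (simp add: field_simps)
  finally have base: "(dl * w - e) / (A * dl ^ k * B) = ((w - e/dl)/(w - e)) * dl ^ m'" .
  have b0: "0 \<le> (w - e/dl)/(w - e)" using dl we dw by (simp add: field_simps)
  have dd: "(dl ^ m') powr (1 / m') = dl"
    using dl m' by (simp add: powr_realpow[symmetric] powr_powr)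
  have pm: "(((w - e/dl)/(w - e)) * dl ^ m') powr (1/m') = ((w - e/dl)/(w - e)) powr (1/m') * (dl ^ m') powr (1/m')"
    by (rule powr_mult)
  show ?thesis unfolding base pm dd ..
qed

lemma prod_upd:
  fixes f :: "nat \<Rightarrow> real"
  assumes "finite S" "i \<in> S"
  shows "(\<Prod>l\<in>S. if l = i then c * f l else f l) = c * prod f S"
proof -
  have "(\<Prod>l\<in>S. if l = i then c * f l else f l) = (c * f i) * (\<Prod>l\<in>S-{i}. if l = i then c * f l else f l)"
    using assms by (simp add: prod.remove)
  also have "(\<Prod>l\<in>S-{i}. if l = i then c * f l else f l) = prod f (S - {i})"
    by (rule prod.cong) auto
  also have "c * f i * prod f (S - {i}) = c * prod f S"
    using assms by (simp add: prod.remove)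
  finally show ?thesis .
qed

lemma part1:
  assumes gen: "(\<alpha>, \<beta>, j) \<in> generated d eps" and dec: "decomposed d eps (\<alpha>, \<beta>, j)"
    and big: "tdelta d eps (\<alpha>, \<beta>, j) * W d \<alpha> \<beta> > eps" and i: "i \<in> {j..d}"
  shows "decomposed d eps (tchild d eps (\<alpha>, \<beta>, j) i)
      \<and> tdelta d eps (tchild d eps (\<alpha>, \<beta>, j) i) = tg d eps (tdelta d eps (\<alpha>, \<beta>, j)) (W d \<alpha> \<beta>) i"
proof -
  have ip: "inv d (\<alpha>, \<beta>, j)" using gen_inv[OF gen] .
  define dl where "dl = tdelta d eps (\<alpha>, \<beta>, j)"
  have dp: "0 < dl" using delta_pos[OF ip dec] dl_def by simp
  have jd: "j \<le> d" and wg: "W d \<alpha> \<beta> > eps" using dec by (auto simp: decomposed_def)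
  have j1: "1 \<le> j" using ip by (simp add: inv_def)
  have ij: "j \<le> i" "i \<le> d" using i by auto
  define w where "w = W d \<alpha> \<beta>"
  have w: "w = (\<Prod>l=1..d. \<beta> l)" using W_eq[OF ip jd] w_def by simp
  define A where "A = (\<Prod>l=1..<j. \<alpha> l)"
  define B where "B = (\<Prod>l=j..d. \<beta> l)"
  have A: "A > 0" using ip by (auto simp: A_def inv_def intro!: prod_pos)
  have B: "B > 0" using ip j1 by (auto simp: B_def inv_def intro!: prod_pos)
  have dldef: "dl = ((w - eps) / (A * B)) powr (1 / real (d - j + 1))"
    by (simp add: dl_def tdelta_def w A_def B_def)
  have x0: "(w - eps) / (A * B) > 0" using A B wg w_def by simp
  have dm: "dl ^ (d - j + 1) = (w - eps) / (A * B)"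
    unfolding dldef by (rule root_pow) (use x0 in auto)
  define a where "a = (\<lambda>l. if l < i then tgamma d eps (\<alpha>, \<beta>, j) l else \<alpha> l)"
  define b where "b = (\<lambda>l. if l = i then tgamma d eps (\<alpha>, \<beta>, j) i else \<beta> l)"
  have ch: "tchild d eps (\<alpha>, \<beta>, j) i = (a, b, i)"
    using ij by (simp add: tchild_def a_def b_def)
  have gam: "\<And>l. tgamma d eps (\<alpha>, \<beta>, j) l = (if l < j then \<alpha> l else dl * \<beta> l)"
    by (simp add: tgamma_def dl_def)
  have F1: "(\<Prod>l=1..d. b l) = dl * w"
  proof -
    have "(\<Prod>l=1..d. b l) = (\<Prod>l\<in>{1..d}. if l = i then dl * \<beta> l else \<beta> l)"
      using ij by (intro prod.cong) (auto simp: b_def gam)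
    also have "\<dots> = dl * w" using ij j1 w by (subst prod_upd) auto
    finally show ?thesis .
  qed
  have F3: "(\<Prod>l=i..d. b l) = dl * (\<Prod>l=i..d. \<beta> l)"
  proof -
    have "(\<Prod>l=i..d. b l) = (\<Prod>l\<in>{i..d}. if l = i then dl * \<beta> l else \<beta> l)"
      using ij by (intro prod.cong) (auto simp: b_def gam)
    also have "\<dots> = dl * (\<Prod>l=i..d. \<beta> l)" using ij by (subst prod_upd) auto
    finally show ?thesis .
  qed
  have F2: "(\<Prod>l=1..<i. a l) = A * (dl ^ (i - j) * (\<Prod>l=j..<i. \<beta> l))"
  proof -
    have "(\<Prod>l=1..<i. a l) = (\<Prod>l=1..<i. if l < j then \<alpha> l else dl * \<beta> l)"
      by (intro prod.cong) (auto simp: a_def gam)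
    also have "\<dots> = (\<Prod>l=1..<j. if l < j then \<alpha> l else dl * \<beta> l) * (\<Prod>l=j..<i. if l < j then \<alpha> l else dl * \<beta> l)"
      by (rule prod.atLeastLessThan_concat[symmetric]) (use j1 ij in auto)
    also have "(\<Prod>l=1..<j. if l < j then \<alpha> l else dl * \<beta> l) = A"
      unfolding A_def by (intro prod.cong) auto
    also have "(\<Prod>l=j..<i. if l < j then \<alpha> l else dl * \<beta> l) = (\<Prod>l=j..<i. dl * \<beta> l)"
      by (intro prod.cong) auto
    also have "\<dots> = dl ^ (i - j) * (\<Prod>l=j..<i. \<beta> l)"
      by (simp add: prod.distrib)
    finally show ?thesis .
  qed
  have F4: "(\<Prod>l=j..<i. \<beta> l) * (\<Prod>l=i..d. \<beta> l) = B"
  proof -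
    have "(\<Prod>l=j..<i. \<beta> l) * (\<Prod>l=i..<Suc d. \<beta> l) = (\<Prod>l=j..<Suc d. \<beta> l)"
      using ij by (simp add: prod.atLeastLessThan_concat)
    thus ?thesis by (simp add: B_def atLeastLessThanSuc_atLeastAtMost)
  qed
  have den: "(\<Prod>l=1..<i. a l) * (\<Prod>l=i..d. b l) = A * dl ^ (i - j + 1) * B"
    using F2 F3 F4[symmetric] by (simp add: algebra_simps)
  have tdc: "tdelta d eps (a, b, i) = ((dl * w - eps) / (A * dl ^ (i - j + 1) * B)) powr (1 / real (d - i + 1))"
    unfolding tdelta_def prod.case F1 den ..
  have big': "dl * w > eps" using big dl_def w_def by simp
  have "tdelta d eps (a, b, i) = ((w - eps/dl)/(w - eps)) powr (1/real (d - i + 1)) * dl"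
    unfolding tdc
    by (rule key[OF A B dp dm _ _ _ big']) (use ij wg w_def in auto)
  moreover have "decomposed d eps (a, b, i)"
  proof -
    have "(\<Prod>l=1..d. a l) = 0"
      using ip ij j1 by (intro prod_zero) (auto simp: a_def inv_def intro!: bexI[of _ i])
    hence "W d a b = dl * w" using F1 by (simp add: W_def)
    thus ?thesis using big' ij by (simp add: decomposed_def)
  qed
  ultimately show ?thesis using ch by (simp add: tg_def dl_def w_def)
qed

theorem mainTheorem1:
  fixes d :: nat and eps :: real
  assumes eps: "0 < eps" "eps < 1"
  shows "(\<forall>\<alpha> \<beta> j. (\<alpha>, \<beta>, j) \<in> generated d eps \<longrightarrow> 1 \<le> j \<longrightarrow> decomposed d eps (\<alpha>, \<beta>, j)
           \<longrightarrow> tdelta d eps (\<alpha>, \<beta>, j) * W d \<alpha> \<beta> > eps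
           \<longrightarrow> (\<forall>i\<in>{j..d}. decomposed d eps (tchild d eps (\<alpha>, \<beta>, j) i)
                 \<and> tdelta d eps (tchild d eps (\<alpha>, \<beta>, j) i)
                   = tg d eps (tdelta d eps (\<alpha>, \<beta>, j)) (W d \<alpha> \<beta>) i))
      \<and> (\<forall>\<delta>1 \<delta>2 w i. 0 < \<delta>1 \<longrightarrow> \<delta>1 < \<delta>2 \<longrightarrow> \<delta>2 < 1 \<longrightarrow> w > eps / \<delta>1 \<longrightarrow> i \<in> {1..d}
           \<longrightarrow> tg d eps \<delta>1 w i < tg d eps \<delta>2 w i)
      \<and> (\<forall>\<delta> w1 w2 i. 0 < \<delta> \<longrightarrow> \<delta> < 1 \<longrightarrow> eps / \<delta> < w1 \<longrightarrow> w1 < w2 \<longrightarrow> i \<in> {1..d}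
           \<longrightarrow> tg d eps \<delta> w1 i < tg d eps \<delta> w2 i)
      \<and> (\<forall>\<delta> w i1 i2. 0 < \<delta> \<longrightarrow> \<delta> < 1 \<longrightarrow> eps / \<delta> < w \<longrightarrow> 1 \<le> i1 \<longrightarrow> i1 < i2 \<longrightarrow> i2 \<le> d
           \<longrightarrow> tg d eps \<delta> w i2 < tg d eps \<delta> w i1)"
proof (intro conjI allI impI ballI)
  fix \<alpha> \<beta> j i
  assume "(\<alpha>, \<beta>, j) \<in> generated d eps" "decomposed d eps (\<alpha>, \<beta>, j)"
    "tdelta d eps (\<alpha>, \<beta>, j) * W d \<alpha> \<beta> > eps" "i \<in> {j..d}"
  from part1[OF this] show "decomposed d eps (tchild d eps (\<alpha>, \<beta>, j) i)"
    "tdelta d eps (tchild d eps (\<alpha>, \<beta>, j) i) = tg d eps (tdelta d eps (\<alpha>, \<beta>, j)) (W d \<alpha> \<beta>) i"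
    by auto
next
  fix d1 d2 w :: real and i :: nat
  assume "0 < d1" "d1 < d2" "d2 < 1" "w > eps / d1" "i \<in> {1..d}"
  thus "tg d eps d1 w i < tg d eps d2 w i"
    unfolding tg_def by (intro tg_mono_delta) (use eps in auto)
next
  fix dl w1 w2 :: real and i :: nat
  assume "0 < dl" "dl < 1" "eps / dl < w1" "w1 < w2" "i \<in> {1..d}"
  thus "tg d eps dl w1 i < tg d eps dl w2 i"
    unfolding tg_def by (intro tg_mono_w) (use eps in auto)
next
  fix dl w :: real and i1 i2 :: nat
  assume "0 < dl" "dl < 1" "eps / dl < w" "1 \<le> i1" "i1 < i2" "i2 \<le> d"
  thus "tg d eps dl w i2 < tg d eps dl w i1"
    unfolding tg_def by (intro tg_mono_i) (use eps in auto)
qed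

end
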